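(* For every online learning algorithm for the Dd-MDP problem, there exists a $T$-round Dd-MDP instance (with a finite policy collection) on which the algorithm's regret is $\Omega(T)$.
   Context: Dynamic deterministic MDP (Dd-MDP): finite state set $\mathcal S$, finite action set $\mathcal X$, feasible action sets $X_s\subseteq\mathcal X$ for $s\in\mathcal S$. The game lasts $T$ rounds from initial state $s_1$. In round $t$ the decision maker plays a (possibly randomized) $x_t\in X_{s_t}$; simultaneously an adversary chooses a transition function $g_t$ and a reward function $f_t$ (defined on pairs $(s,x)$ with $x\in X_s$, rewards in $[0,1]$). Then $s_{t+1}=g_t(s_t,x_t)$, the reward is $f_t(s_t,x_t)$, and $g_t,f_t$ are revealed. A policy is $\gamma:\mathcal S\to\mathcal X$ with $\gamma(s)\in X_s$; its simulation is $s^\gamma_1=s_1$, $x^\gamma_t=\gamma(s^\gamma_t)$, $s^\gamma_{t+1}=g_t(s^\gamma_t,x^\gamma_t)$. The regret w.r.t. a finite policy set $\Gamma$ is $\max_{\gamma\in\Gamma}\sum_t f_t(s^\gamma_t,x^\gamma_t)-\sum_t\mathbb{E}[f_t(s_t,x_t)]$. *)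

theory Defs
  imports "HOL-Probability.Probability"
begin

record ddmdp =
  St   :: "nat set"
  Act  :: "nat set"
  Feas :: "nat \<Rightarrow> nat set"
  init :: nat
  Pol  :: "(nat \<Rightarrow> nat) set"

type_synonym trans = "nat \<Rightarrow> nat \<Rightarrow> nat"
type_synonym rew = "nat \<Rightarrow> nat \<Rightarrow> real"

text \<open>History entry of a past round: (state, action played, revealed g, revealed f).\<close>
type_synonym hist = "(nat \<times> nat \<times> trans \<times> rew) list"

text \<open>An online (randomized) algorithm: given the static instance data, the horizon T,
the round index t, the current state and the history of past rounds, it outputs a
distribution over actions.\<close>
type_synonym algorithm = "ddmdp \<Rightarrow> nat \<Rightarrow> nat \<Rightarrow> nat \<Rightarrow> hist \<Rightarrow> nat pmf"

definition valid_alg :: "algorithm \<Rightarrow> bool" where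
  "valid_alg A \<longleftrightarrow> (\<forall>P T t s h. Feas P s \<noteq> {} \<longrightarrow> set_pmf (A P T t s h) \<subseteq> Feas P s)"

text \<open>Well-formed T-round instance (rounds indexed 0..T-1).\<close>
definition wf_instance :: "ddmdp \<Rightarrow> nat \<Rightarrow> (nat \<Rightarrow> trans) \<Rightarrow> (nat \<Rightarrow> rew) \<Rightarrow> bool" where
  "wf_instance P T g f \<longleftrightarrow>
     finite (St P) \<and> finite (Act P) \<and> init P \<in> St P \<and>
     (\<forall>s\<in>St P. Feas P s \<subseteq> Act P \<and> Feas P s \<noteq> {}) \<and>
     finite (Pol P) \<and> Pol P \<noteq> {} \<and>
     (\<forall>\<gamma>\<in>Pol P. \<forall>s\<in>St P. \<gamma> s \<in> Feas P s) \<and>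
     (\<forall>t<T. \<forall>s\<in>St P. \<forall>x\<in>Feas P s. g t s x \<in> St P \<and> 0 \<le> f t s x \<and> f t s x \<le> 1)"

fun run :: "algorithm \<Rightarrow> ddmdp \<Rightarrow> nat \<Rightarrow> (nat \<Rightarrow> trans) \<Rightarrow> (nat \<Rightarrow> rew) \<Rightarrow> nat \<Rightarrow> (hist \<times> nat) pmf" where
  "run A P T g f 0 = return_pmf ([], init P)"
| "run A P T g f (Suc t) =
     bind_pmf (run A P T g f t) (\<lambda>(h, s).
       bind_pmf (A P T t s h) (\<lambda>x. return_pmf (h @ [(s, x, g t, f t)], g t s x)))"

definition alg_reward :: "algorithm \<Rightarrow> ddmdp \<Rightarrow> nat \<Rightarrow> (nat \<Rightarrow> trans) \<Rightarrow> (nat \<Rightarrow> rew) \<Rightarrow> real" where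
  "alg_reward A P T g f =
     measure_pmf.expectation (run A P T g f T)
       (\<lambda>(h, s). \<Sum>(s', x, g', f') \<leftarrow> h. f' s' x)"

fun pol_state :: "ddmdp \<Rightarrow> (nat \<Rightarrow> trans) \<Rightarrow> (nat \<Rightarrow> nat) \<Rightarrow> nat \<Rightarrow> nat" where
  "pol_state P g \<gamma> 0 = init P"
| "pol_state P g \<gamma> (Suc t) = g t (pol_state P g \<gamma> t) (\<gamma> (pol_state P g \<gamma> t))"

definition pol_reward :: "ddmdp \<Rightarrow> nat \<Rightarrow> (nat \<Rightarrow> trans) \<Rightarrow> (nat \<Rightarrow> rew) \<Rightarrow> (nat \<Rightarrow> nat) \<Rightarrow> real" where
  "pol_reward P T g f \<gamma> = (\<Sum>t<T. f t (pol_state P g \<gamma> t) (\<gamma> (pol_state P g \<gamma> t)))"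

definition regret :: "algorithm \<Rightarrow> ddmdp \<Rightarrow> nat \<Rightarrow> (nat \<Rightarrow> trans) \<Rightarrow> (nat \<Rightarrow> rew) \<Rightarrow> real" where
  "regret A P T g f = (MAX \<gamma>\<in>Pol P. pol_reward P T g f \<gamma>) - alg_reward A P T g f"

end

theory Submission
  imports Defs
begin

definition P0 :: ddmdp where
  "P0 = \<lparr>St = {0,1,2}, Act = {0,1}, Feas = (\<lambda>s. {0,1}), init = 0,
         Pol = {(\<lambda>s. 0), (\<lambda>s. 1)}\<rparr>"

definition gB :: "nat \<Rightarrow> nat \<Rightarrow> trans" where
  "gB b = (\<lambda>t s x. if s = 0 then (if x = b then 1 else 2) else s)"

definition fB :: "nat \<Rightarrow> nat \<Rightarrow> rew" where
  "fB b = (\<lambda>t s x. if s = 0 then (if x = b then 1 else 0) else if s = 1 then 1 else 0)"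

definition FF :: "hist \<times> nat \<Rightarrow> real \<times> nat" where
  "FF = (\<lambda>(h, s). ((\<Sum>(s', x, g', f') \<leftarrow> h. f' s' x), s))"

lemma run_map:
  assumes "t \<ge> 1"
  shows "map_pmf FF (run A P0 T (gB b) (fB b) t) =
         map_pmf (\<lambda>x. if x = b then (real t, 1) else (0, 2)) (A P0 T 0 0 [])"
  using assms
proof (induction t)
  case 0
  then show ?case by simp
next
  case (Suc t)
  show ?case
  proof (cases "t = 0")
    case True
    then show ?thesis
      by (simp add: map_pmf_def bind_return_pmf bind_assoc_pmf FF_def gB_def fB_def P0_def
            cong: if_cong) (rule bind_pmf_cong; simp)
  next
    case False
    then have IH: "map_pmf FF (run A P0 T (gB b) (fB b) t) =
         map_pmf (\<lambda>x. if x = b then (real t, 1) else (0, 2)) (A P0 T 0 0 [])"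
      using Suc by simp
    define G :: "real \<times> nat \<Rightarrow> real \<times> nat" where
      "G = (\<lambda>(r, s). (r + (if s = 1 then 1 else 0), s))"
    have supp: "snd hs \<noteq> 0" if "hs \<in> set_pmf (run A P0 T (gB b) (fB b) t)" for hs
    proof -
      have "FF hs \<in> set_pmf (map_pmf FF (run A P0 T (gB b) (fB b) t))"
        using that by simp
      then have "FF hs \<in> (\<lambda>x. if x = b then (real t, 1::nat) else (0, 2)) ` set_pmf (A P0 T 0 0 [])"
        unfolding IH by simp
      then show ?thesis by (cases hs) (auto simp: FF_def split: if_splits)
    qed
    have "map_pmf FF (run A P0 T (gB b) (fB b) (Suc t)) =
          bind_pmf (run A P0 T (gB b) (fB b) t) (\<lambda>hs. return_pmf (G (FF hs)))"
      unfolding run.simps map_bind_pmf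
    proof (rule bind_pmf_cong[OF refl])
      fix hs assume hs: "hs \<in> set_pmf (run A P0 T (gB b) (fB b) t)"
      obtain h s where hs_eq: "hs = (h, s)" by (cases hs)
      have "s \<noteq> 0" using supp[OF hs] hs_eq by simp
      then show "map_pmf FF (case hs of (h, s) \<Rightarrow> A P0 T t s h \<bind>
              (\<lambda>x. return_pmf (h @ [(s, x, gB b t, fB b t)], gB b t s x))) =
            return_pmf (G (FF hs))"
        by (simp add: hs_eq map_pmf_def bind_assoc_pmf bind_return_pmf FF_def G_def gB_def fB_def
              bind_return_pmf')
    qed
    also have "\<dots> = map_pmf G (map_pmf FF (run A P0 T (gB b) (fB b) t))"
      by (simp add: map_pmf_def bind_assoc_pmf bind_return_pmf)
    also have "\<dots> = map_pmf (\<lambda>x. if x = b then (real (Suc t), 1) else (0, 2)) (A P0 T 0 0 [])"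
      unfolding IH pmf.map_comp
      by (rule pmf.map_cong) (auto simp: G_def)
    finally show ?thesis .
  qed
qed

lemma pol_state_b: "pol_state P0 (gB b) (\<lambda>s. b) t = (if t = 0 then 0 else 1)"
  by (induction t) (auto simp: P0_def gB_def)

lemma pol_reward_b: "pol_reward P0 T (gB b) (fB b) (\<lambda>s. b) = real T"
proof -
  have "pol_reward P0 T (gB b) (fB b) (\<lambda>s. b) = (\<Sum>t<T. (1::real))"
    unfolding pol_reward_def pol_state_b by (rule sum.cong) (auto simp: fB_def)
  then show ?thesis by simp
qed

lemma alg_reward_b:
  assumes "T \<ge> 1"
  shows "alg_reward A P0 T (gB b) (fB b) = real T * pmf (A P0 T 0 0 []) b"
proof -
  have "alg_reward A P0 T (gB b) (fB b) =
        measure_pmf.expectation (map_pmf FF (run A P0 T (gB b) (fB b) T)) fst"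
    unfolding alg_reward_def integral_map_pmf
    by (rule Bochner_Integration.integral_cong) (auto simp: FF_def)
  also have "\<dots> = measure_pmf.expectation (A P0 T 0 0 []) (\<lambda>x. real T * indicator {b} x)"
    unfolding run_map[OF assms] integral_map_pmf
    by (rule Bochner_Integration.integral_cong) auto
  also have "\<dots> = real T * pmf (A P0 T 0 0 []) b"
    by (simp add: measure_pmf_single)
  finally show ?thesis .
qed

theorem proposition1:
  shows "\<exists>c>0. \<forall>T\<ge>1. \<forall>A. valid_alg A \<longrightarrow>
           (\<exists>P g f. wf_instance P T g f \<and> regret A P T g f \<ge> c * real T)"
proof (intro exI[of _ "1/2"] conjI allI impI)
  fix T :: nat and A :: algorithm
  assume T: "T \<ge> 1"
  define p where "p = A P0 T 0 0 []"
  define b :: nat where "b = (if pmf p 0 \<le> 1/2 then 0 else 1)"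
  have sum01: "pmf p 0 + pmf p 1 \<le> 1"
  proof -
    have "pmf p 0 + pmf p 1 = measure_pmf.prob p {0,1}"
      by (subst measure_measure_pmf_finite) auto
    also have "\<dots> \<le> 1" by simp
    finally show ?thesis .
  qed
  have pb: "pmf p b \<le> 1/2"
    using sum01 by (auto simp: b_def)
  have b01: "b \<in> {0,1}" by (simp add: b_def)
  have wf: "wf_instance P0 T (gB b) (fB b)"
    unfolding wf_instance_def using b01 by (auto simp: P0_def gB_def fB_def)
  have "pol_reward P0 T (gB b) (fB b) (\<lambda>s. b) \<le> (MAX \<gamma>\<in>Pol P0. pol_reward P0 T (gB b) (fB b) \<gamma>)"
    by (rule Max_ge) (use b01 in \<open>auto simp: P0_def\<close>)
  then have "real T \<le> (MAX \<gamma>\<in>Pol P0. pol_reward P0 T (gB b) (fB b) \<gamma>)"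
    by (simp add: pol_reward_b)
  moreover have "alg_reward A P0 T (gB b) (fB b) \<le> real T / 2"
  proof -
    have "real T * pmf p b \<le> real T * (1/2)"
      by (rule mult_left_mono[OF pb]) simp
    then show ?thesis using alg_reward_b[OF T] unfolding p_def by simp
  qed
  ultimately have "regret A P0 T (gB b) (fB b) \<ge> 1/2 * real T"
    unfolding regret_def by simp
  then show "\<exists>P g f. wf_instance P T g f \<and> regret A P T g f \<ge> 1/2 * real T"
    using wf by blast
qed simp

end
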